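(* Let $T$ be a trigraph in $\mathcal F$ that is either the complement of a bipartite trigraph or the complement of a line trigraph. If $T$ is favorable, then either $T$ is a graph (has no switchable pair), or $T$ has an even pair disjoint from its switchable component.
   Context: A trigraph $T$ consists of a finite set $V(T)$ and a map $\theta:\binom{V(T)}{2}\to\{-1,0,1\}$. Two distinct vertices $u,v$ are strongly adjacent if $\theta(uv)=1$, strongly antiadjacent if $\theta(uv)=-1$, and semiadjacent (a switchable pair) if $\theta(uv)=0$; they are adjacent if $\theta(uv)\in\{0,1\}$ and antiadjacent if $\theta(uv)\in\{0,-1\}$. $N(v)$ is the set of vertices adjacent to $v$. The complement $\overline T$ has vertex set $V(T)$ and adjacency function $-\theta$. For $X\subseteq V(T)$, $T|X$ is the trigraph on $X$ with $\theta$ restricted, and $T\setminus X=T|(V(T)\setminus X)$. A clique (strong clique) is a set of pairwise adjacent (strongly adjacent) vertices; a strongly stable set is a set of pairwise strongly antiadjacent vertices. $T$ is a graph if it has no switchable pair. The full realization of $T$ is the graph on $V(T)$ whose edges are the adjacent pairs. A path is a sequence of distinct vertices $p_1,\dots,p_k$ such that $p_i,p_j$ are adjacent when $|i-j|=1$ and antiadjacent when $|i-j|>1$; its length is $k-1$. A hole of length $k\ge5$ consists of vertices $h_1,\dots,h_k$ with $h_i,h_j$ adjacent if $|i-j|\in\{1,k-1\}$ and antiadjacent otherwise; an antihole is an induced subtrigraph whose complement is a hole. $T$ is Berge if it contains no hole of odd length and no antihole of odd length. An even pair of $T$ is a strongly antiadjacent pair $\{u,v\}$ such that every path from $u$ to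 $v$ in $T$ has even length. $\Sigma(T)$ is the graph on $V(T)$ whose edges are the switchable pairs of $T$; a switchable component is a connected component of $\Sigma(T)$ with at least two vertices. $\mathcal F$ is the class of Berge trigraphs $T$ such that: (1) $T$ has at most one switchable component, and it has at most two edges; (2) if the switchable component has exactly one edge $xy$, then $N(x)\cap N(y)=\emptyset$ (it is called small); (3) if it has two edges, with $v$ the vertex of degree two in $\Sigma(T)$ and $x,y$ its neighbours, then $v$ is strongly anticomplete to $V(T)\setminus\{v,x,y\}$, $x$ is strongly antiadjacent to $y$, and $N(x)\cap N(y)=\{v\}$ (it is called light). For $T\in\mathcal F$, $D$ denotes the vertex set of its switchable component ($D=\emptyset$ if $T$ has no switchable pair). A pair $\{u,v\}$ is disjoint from the switchable component if $\{u,v\}\cap D=\emptyset$. A trigraph $T\in\mathcal F$ is favorable if (1) $|V(T)|\ge5$; (2) $T$ has a strongly antiadjacent pair $\{u,v\}$ disjoint from $D$; and (3) if $D=\{x,y\}$ is small, then at least one of $V(T)\setminus(D\cup N(x))$, $V(T)\setminus(D\cup N(y))$ is not a clique. $T$ is bipartite if $V(T)$ can be partitioned into two strongly stable sets. $T$ is a line trigraph if its full realization is the line graph of a bipartite graph and every clique of size at least $3$ in $T$ is a strong clique. $T$ is the complement of a bipartite (line) trigraph if $\overline T$ is a bipartite (line) trigraph. *)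

theory Defs
  imports Main
begin

text \<open>Values of theta outside distinct pairs of V are irrelevant.\<close>

definition trigraph :: "'a set \<Rightarrow> ('a \<Rightarrow> 'a \<Rightarrow> int) \<Rightarrow> bool" where
  "trigraph V th \<longleftrightarrow> finite V \<and>
     (\<forall>u\<in>V. \<forall>v\<in>V. u \<noteq> v \<longrightarrow> th u v = th v u \<and> th u v \<in> {-1, 0, 1})"

definition compl_tg :: "('a \<Rightarrow> 'a \<Rightarrow> int) \<Rightarrow> ('a \<Rightarrow> 'a \<Rightarrow> int)" where
  "compl_tg th = (\<lambda>u v. - th u v)"

definition adj :: "('a \<Rightarrow> 'a \<Rightarrow> int) \<Rightarrow> 'a \<Rightarrow> 'a \<Rightarrow> bool" where
  "adj th u v \<longleftrightarrow> u \<noteq> v \<and> th u v \<in> {0, 1}"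

definition antiadj :: "('a \<Rightarrow> 'a \<Rightarrow> int) \<Rightarrow> 'a \<Rightarrow> 'a \<Rightarrow> bool" where
  "antiadj th u v \<longleftrightarrow> u \<noteq> v \<and> th u v \<in> {0, -1}"

definition strongly_adj :: "('a \<Rightarrow> 'a \<Rightarrow> int) \<Rightarrow> 'a \<Rightarrow> 'a \<Rightarrow> bool" where
  "strongly_adj th u v \<longleftrightarrow> u \<noteq> v \<and> th u v = 1"

definition strongly_antiadj :: "('a \<Rightarrow> 'a \<Rightarrow> int) \<Rightarrow> 'a \<Rightarrow> 'a \<Rightarrow> bool" where
  "strongly_antiadj th u v \<longleftrightarrow> u \<noteq> v \<and> th u v = -1"

definition semiadj :: "('a \<Rightarrow> 'a \<Rightarrow> int) \<Rightarrow> 'a \<Rightarrow> 'a \<Rightarrow> bool" where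
  "semiadj th u v \<longleftrightarrow> u \<noteq> v \<and> th u v = 0"

definition nbhd :: "'a set \<Rightarrow> ('a \<Rightarrow> 'a \<Rightarrow> int) \<Rightarrow> 'a \<Rightarrow> 'a set" where
  "nbhd V th v = {u \<in> V. adj th u v}"

definition is_clique :: "('a \<Rightarrow> 'a \<Rightarrow> int) \<Rightarrow> 'a set \<Rightarrow> bool" where
  "is_clique th K \<longleftrightarrow> (\<forall>u\<in>K. \<forall>v\<in>K. u \<noteq> v \<longrightarrow> adj th u v)"

definition is_strong_clique :: "('a \<Rightarrow> 'a \<Rightarrow> int) \<Rightarrow> 'a set \<Rightarrow> bool" where
  "is_strong_clique th K \<longleftrightarrow> (\<forall>u\<in>K. \<forall>v\<in>K. u \<noteq> v \<longrightarrow> strongly_adj th u v)"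

definition is_strongly_stable :: "('a \<Rightarrow> 'a \<Rightarrow> int) \<Rightarrow> 'a set \<Rightarrow> bool" where
  "is_strongly_stable th S \<longleftrightarrow> (\<forall>u\<in>S. \<forall>v\<in>S. u \<noteq> v \<longrightarrow> strongly_antiadj th u v)"

text \<open>A path p_1,...,p_k given as a nonempty list of distinct vertices;
  its length is k - 1.\<close>
definition is_path :: "'a set \<Rightarrow> ('a \<Rightarrow> 'a \<Rightarrow> int) \<Rightarrow> 'a list \<Rightarrow> bool" where
  "is_path V th ps \<longleftrightarrow> ps \<noteq> [] \<and> distinct ps \<and> set ps \<subseteq> V \<and>
     (\<forall>i j. i < j \<and> j < length ps \<longrightarrow>
        (j - i = 1 \<longrightarrow> adj th (ps ! i) (ps ! j)) \<and>
        (j - i > 1 \<longrightarrow> antiadj th (ps ! i) (ps ! j)))"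

definition is_hole :: "'a set \<Rightarrow> ('a \<Rightarrow> 'a \<Rightarrow> int) \<Rightarrow> 'a list \<Rightarrow> bool" where
  "is_hole V th hs \<longleftrightarrow> length hs \<ge> 5 \<and> distinct hs \<and> set hs \<subseteq> V \<and>
     (\<forall>i j. i < j \<and> j < length hs \<longrightarrow>
        (j - i \<in> {1, length hs - 1} \<longrightarrow> adj th (hs ! i) (hs ! j)) \<and>
        (j - i \<notin> {1, length hs - 1} \<longrightarrow> antiadj th (hs ! i) (hs ! j)))"

definition is_antihole :: "'a set \<Rightarrow> ('a \<Rightarrow> 'a \<Rightarrow> int) \<Rightarrow> 'a list \<Rightarrow> bool" where
  "is_antihole V th hs \<longleftrightarrow> is_hole V (compl_tg th) hs"

definition berge :: "'a set \<Rightarrow> ('a \<Rightarrow> 'a \<Rightarrow> int) \<Rightarrow> bool" where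
  "berge V th \<longleftrightarrow>
     \<not> (\<exists>hs. is_hole V th hs \<and> odd (length hs)) \<and>
     \<not> (\<exists>hs. is_antihole V th hs \<and> odd (length hs))"

definition even_pair :: "'a set \<Rightarrow> ('a \<Rightarrow> 'a \<Rightarrow> int) \<Rightarrow> 'a \<Rightarrow> 'a \<Rightarrow> bool" where
  "even_pair V th u v \<longleftrightarrow> u \<in> V \<and> v \<in> V \<and> strongly_antiadj th u v \<and>
     (\<forall>ps. is_path V th ps \<and> hd ps = u \<and> last ps = v \<longrightarrow> even (length ps - 1))"

definition is_graph_tg :: "'a set \<Rightarrow> ('a \<Rightarrow> 'a \<Rightarrow> int) \<Rightarrow> bool" where
  "is_graph_tg V th \<longleftrightarrow> \<not> (\<exists>u\<in>V. \<exists>v\<in>V. semiadj th u v)"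

definition switch_verts :: "'a set \<Rightarrow> ('a \<Rightarrow> 'a \<Rightarrow> int) \<Rightarrow> 'a set" where
  "switch_verts V th = {u \<in> V. \<exists>v\<in>V. semiadj th u v}"

definition switch_pairs :: "'a set \<Rightarrow> ('a \<Rightarrow> 'a \<Rightarrow> int) \<Rightarrow> 'a set set" where
  "switch_pairs V th = {{u, v} | u v. u \<in> V \<and> v \<in> V \<and> semiadj th u v}"

definition small_comp :: "'a set \<Rightarrow> ('a \<Rightarrow> 'a \<Rightarrow> int) \<Rightarrow> 'a \<Rightarrow> 'a \<Rightarrow> bool" where
  "small_comp V th x y \<longleftrightarrow> x \<in> V \<and> y \<in> V \<and> x \<noteq> y \<and>
     switch_pairs V th = {{x, y}} \<and> nbhd V th x \<inter> nbhd V th y = {}"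

definition light_comp :: "'a set \<Rightarrow> ('a \<Rightarrow> 'a \<Rightarrow> int) \<Rightarrow> 'a \<Rightarrow> 'a \<Rightarrow> 'a \<Rightarrow> bool" where
  "light_comp V th v x y \<longleftrightarrow> v \<in> V \<and> x \<in> V \<and> y \<in> V \<and> v \<noteq> x \<and> v \<noteq> y \<and> x \<noteq> y \<and>
     switch_pairs V th = {{v, x}, {v, y}} \<and>
     (\<forall>w \<in> V - {v, x, y}. strongly_antiadj th v w) \<and>
     strongly_antiadj th x y \<and>
     nbhd V th x \<inter> nbhd V th y = {v}"

text \<open>A connected component of Sigma(T) with at most two edges is
  a single edge or a path with two edges; "at most one switchable component"
  means all switchable pairs lie in that component.\<close>
definition class_F :: "'a set \<Rightarrow> ('a \<Rightarrow> 'a \<Rightarrow> int) \<Rightarrow> bool" where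
  "class_F V th \<longleftrightarrow> trigraph V th \<and> berge V th \<and>
     (switch_pairs V th = {} \<or>
      (\<exists>x y. small_comp V th x y) \<or>
      (\<exists>v x y. light_comp V th v x y))"

definition favorable :: "'a set \<Rightarrow> ('a \<Rightarrow> 'a \<Rightarrow> int) \<Rightarrow> bool" where
  "favorable V th \<longleftrightarrow> class_F V th \<and> card V \<ge> 5 \<and>
     (\<exists>u\<in>V. \<exists>v\<in>V. strongly_antiadj th u v \<and>
        u \<notin> switch_verts V th \<and> v \<notin> switch_verts V th) \<and>
     (\<forall>x y. small_comp V th x y \<longrightarrow>
        \<not> is_clique th (V - ({x, y} \<union> nbhd V th x)) \<or>
        \<not> is_clique th (V - ({x, y} \<union> nbhd V th y)))"

definition bipartite_tg :: "'a set \<Rightarrow> ('a \<Rightarrow> 'a \<Rightarrow> int) \<Rightarrow> bool" where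
  "bipartite_tg V th \<longleftrightarrow> (\<exists>A B. A \<union> B = V \<and> A \<inter> B = {} \<and>
     is_strongly_stable th A \<and> is_strongly_stable th B)"

text \<open>The full realization (adjacency relation adj on V) is the line graph of a
  (simple) bipartite graph H: vertices of T correspond injectively to edges of H,
  an edge being encoded as a pair (a, b) of a vertex a of the first side and a
  vertex b of the second side (both sides labelled by naturals); two vertices of T
  are adjacent iff the corresponding edges share an end.\<close>
definition line_graph_of_bipartite :: "'a set \<Rightarrow> ('a \<Rightarrow> 'a \<Rightarrow> bool) \<Rightarrow> bool" where
  "line_graph_of_bipartite V E \<longleftrightarrow> (\<exists>f :: 'a \<Rightarrow> nat \<times> nat. inj_on f V \<and>
     (\<forall>u\<in>V. \<forall>v\<in>V. u \<noteq> v \<longrightarrow>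
        (E u v \<longleftrightarrow> fst (f u) = fst (f v) \<or> snd (f u) = snd (f v))))"

definition line_tg :: "'a set \<Rightarrow> ('a \<Rightarrow> 'a \<Rightarrow> int) \<Rightarrow> bool" where
  "line_tg V th \<longleftrightarrow> line_graph_of_bipartite V (adj th) \<and>
     (\<forall>K\<subseteq>V. is_clique th K \<and> card K \<ge> 3 \<longrightarrow> is_strong_clique th K)"

end

theory Submission
  imports Defs
begin

lemma adj_compl: "adj (compl_tg th) u v \<longleftrightarrow> u \<noteq> v \<and> (th u v = 0 \<or> th u v = -1)"
  by (auto simp: adj_def compl_tg_def)

lemma sadj_compl: "strongly_adj (compl_tg th) u v \<longleftrightarrow> u \<noteq> v \<and> th u v = -1"
  by (auto simp: strongly_adj_def compl_tg_def)

lemma santi_compl: "strongly_antiadj (compl_tg th) u v \<longleftrightarrow> u \<noteq> v \<and> th u v = 1"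
  by (auto simp: strongly_antiadj_def compl_tg_def)

lemma sp_zero:
  assumes "trigraph V th" "{a,b} \<in> switch_pairs V th" "a \<noteq> b"
  shows "th a b = 0"
proof -
  obtain u w where "{a,b} = {u,w}" "u \<in> V" "w \<in> V" "semiadj th u w"
    using assms(2) unfolding switch_pairs_def by blast
  then show ?thesis using assms(1,3) unfolding trigraph_def semiadj_def
    by (metis doubleton_eq_iff)
qed

lemma semi_in_sp:
  assumes "u \<in> V" "v \<in> V" "semiadj th u v"
  shows "{u,v} \<in> switch_pairs V th"
  using assms unfolding switch_pairs_def by blast

lemma path_alt:
  assumes "is_path V th ps" "hd ps \<in> S"
    and cross: "\<forall>a\<in>V. \<forall>b\<in>V. adj th a b \<longrightarrow> (a \<in> S \<longleftrightarrow> b \<notin> S)"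
  shows "i < length ps \<Longrightarrow> (ps ! i \<in> S \<longleftrightarrow> even i)"
proof (induction i)
  case 0
  then show ?case using assms(1,2) by (simp add: is_path_def hd_conv_nth)
next
  case (Suc i)
  have pa: "\<forall>i j. i < j \<and> j < length ps \<longrightarrow>
        (j - i = 1 \<longrightarrow> adj th (ps ! i) (ps ! j)) \<and>
        (j - i > 1 \<longrightarrow> antiadj th (ps ! i) (ps ! j))" and sV: "set ps \<subseteq> V"
    using assms(1) unfolding is_path_def by blast+
  have il: "i < length ps" using Suc.prems by simp
  have ad: "adj th (ps ! i) (ps ! Suc i)" using pa[rule_format, of i "Suc i"] Suc.prems by simp
  have a: "ps ! i \<in> V" using sV il nth_mem by blast
  have b: "ps ! Suc i \<in> V" using sV Suc.prems nth_mem by blast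
  have "ps ! i \<in> S \<longleftrightarrow> ps ! Suc i \<notin> S" using cross a b ad by blast
  then show ?case using Suc.IH[OF il] by simp
qed

lemma even_from_class:
  assumes "trigraph V th"
    and cross: "\<forall>a\<in>V. \<forall>b\<in>V. adj th a b \<longrightarrow> (a \<in> S \<longleftrightarrow> b \<notin> S)"
    and "u \<in> S" "v \<in> S" "S \<subseteq> V" "th u v = -1" "u \<noteq> v"
  shows "even_pair V th u v"
  unfolding even_pair_def
proof (intro conjI allI impI)
  show "u \<in> V" "v \<in> V" using assms by auto
  show "strongly_antiadj th u v" using assms by (simp add: strongly_antiadj_def)
  fix ps assume p: "is_path V th ps \<and> hd ps = u \<and> last ps = v"
  then have ne: "ps \<noteq> []" by (simp add: is_path_def)
  have "ps ! (length ps - 1) \<in> S \<longleftrightarrow> even (length ps - 1)"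
    using path_alt[of V th ps S "length ps - 1"] p assms ne by auto
  moreover have "ps ! (length ps - 1) = v" using p ne by (simp add: last_conv_nth)
  ultimately show "even (length ps - 1)" using assms by auto
qed

lemma two_elems:
  assumes "2 \<le> card A"
  shows "\<exists>a b. a \<in> A \<and> b \<in> A \<and> a \<noteq> b"
proof -
  have "A \<noteq> {}" using assms by auto
  then obtain a where a: "a \<in> A" by blast
  have "finite A" using assms card.infinite by fastforce
  then have "card (A - {a}) \<ge> 1" using assms a by simp
  then obtain b where "b \<in> A - {a}" by (metis card.empty ex_in_conv not_one_le_zero)
  then show ?thesis using a by blast
qed

lemma line_small:
  fixes g1 g2 :: "'a \<Rightarrow> nat"
  assumes tg: "trigraph V th" and sm: "small_comp V th x y" and c5: "card V \<ge> 5"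
    and inj: "inj_on (\<lambda>w. (g1 w, g2 w)) V"
    and E: "\<forall>u\<in>V. \<forall>v\<in>V. u \<noteq> v \<longrightarrow> (adj (compl_tg th) u v \<longleftrightarrow> g1 u = g1 v \<or> g2 u = g2 v)"
    and cl: "\<forall>K\<subseteq>V. is_clique (compl_tg th) K \<and> card K \<ge> 3 \<longrightarrow> is_strong_clique (compl_tg th) K"
    and g2: "g2 x = g2 y"
  shows "\<exists>u\<in>V. \<exists>v\<in>V. even_pair V th u v \<and>
       u \<notin> switch_verts V th \<and> v \<notin> switch_verts V th"
proof -
  have xV: "x \<in> V" and yV: "y \<in> V" and xy: "x \<noteq> y" and spv: "switch_pairs V th = {{x,y}}"
    and NN: "nbhd V th x \<inter> nbhd V th y = {}" using sm unfolding small_comp_def by simp_all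
  have sym: "\<And>u v. u \<in> V \<Longrightarrow> v \<in> V \<Longrightarrow> u \<noteq> v \<Longrightarrow> th u v = th v u \<and> th u v \<in> {-1,0,1}"
    using tg unfolding trigraph_def by blast
  have thxy: "th x y = 0" using sp_zero[OF tg _ xy] spv by simp
  have g1: "g1 x \<noteq> g1 y"
  proof
    assume "g1 x = g1 y"
    then have "(\<lambda>w. (g1 w, g2 w)) x = (\<lambda>w. (g1 w, g2 w)) y" using g2 by simp
    then show False using inj_onD[OF inj _ xV yV] xy by blast
  qed
  have semi: "\<And>u v. u \<in> V \<Longrightarrow> v \<in> V \<Longrightarrow> semiadj th u v \<Longrightarrow> {u,v} = {x,y}"
  proof -
    fix u v assume "u \<in> V" "v \<in> V" "semiadj th u v"
    then have "{u,v} \<in> switch_pairs V th" by (rule semi_in_sp)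
    then show "{u,v} = {x,y}" using spv by simp
  qed
  have sv: "switch_verts V th \<subseteq> {x,y}"
    unfolding switch_verts_def using semi by blast
  define P where "P = {w \<in> V. g1 w = g1 x}"
  have cover: "\<And>w. w \<in> V \<Longrightarrow> w \<in> P \<or> g1 w = g1 y"
  proof -
    fix w assume wV: "w \<in> V"
    show "w \<in> P \<or> g1 w = g1 y"
    proof (cases "w = x \<or> w = y")
      case True then show ?thesis using xV by (auto simp: P_def)
    next
      case False
      then have wx: "w \<noteq> x" and wy: "w \<noteq> y" by auto
      have "\<not> (adj th w x \<and> adj th w y)" using NN wV by (auto simp: nbhd_def)
      then have one: "adj (compl_tg th) w x \<or> adj (compl_tg th) w y"
        using sym[OF wV xV wx] sym[OF wV yV wy] wx wy unfolding adj_compl by (auto simp: adj_def)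
      have "\<not> (adj (compl_tg th) w x \<and> adj (compl_tg th) w y)"
      proof
        assume h: "adj (compl_tg th) w x \<and> adj (compl_tg th) w y"
        have "is_clique (compl_tg th) {w,x,y}"
          using h sym[OF wV xV wx] sym[OF wV yV wy] sym[OF xV yV xy] thxy wx wy xy
          unfolding is_clique_def adj_compl by auto
        moreover have "card {w,x,y} \<ge> 3" using wx wy xy by simp
        ultimately have "is_strong_clique (compl_tg th) {w,x,y}" using cl wV xV yV by auto
        then have "strongly_adj (compl_tg th) x y" unfolding is_strong_clique_def using xy by auto
        then show False using thxy by (simp add: sadj_compl)
      qed
      then show ?thesis using one E wV xV yV wx wy g2 by (auto simp: P_def)
    qed
  qed
  have yP: "y \<notin> P" and xP: "x \<in> P" using g1 xV by (auto simp: P_def)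
  have cross: "\<forall>a\<in>V. \<forall>b\<in>V. adj th a b \<longrightarrow> (a \<in> P \<longleftrightarrow> b \<notin> P)"
  proof (intro ballI impI)
    fix a b assume aV: "a \<in> V" and bV: "b \<in> V" and ab: "adj th a b"
    have anb: "a \<noteq> b" using ab by (simp add: adj_def)
    show "a \<in> P \<longleftrightarrow> b \<notin> P"
    proof (rule ccontr)
      assume "\<not> (a \<in> P \<longleftrightarrow> b \<notin> P)"
      then have "g1 a = g1 b" using cover[OF aV] cover[OF bV] by (auto simp: P_def)
      then have "adj (compl_tg th) a b" using E aV bV anb by auto
      then have "semiadj th a b" using ab unfolding adj_compl by (auto simp: adj_def semiadj_def)
      then have "{a,b} = {x,y}" using semi aV bV by blast
      then have "g1 x = g1 y" using \<open>g1 a = g1 b\<close> by (metis doubleton_eq_iff)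
      then show False using g1 by simp
    qed
  qed
  have good: "\<And>S. S \<subseteq> V \<Longrightarrow> (\<forall>a\<in>V. \<forall>b\<in>V. adj th a b \<longrightarrow> (a \<in> S \<longleftrightarrow> b \<notin> S))
     \<Longrightarrow> (\<forall>a\<in>S. \<forall>b\<in>S. g1 a = g1 b) \<Longrightarrow> card (S - {x,y}) \<ge> 2 \<Longrightarrow> \<exists>u\<in>V. \<exists>v\<in>V. even_pair V th u v \<and>
       u \<notin> switch_verts V th \<and> v \<notin> switch_verts V th"
  proof -
    fix S assume SV: "S \<subseteq> V" and cr: "\<forall>a\<in>V. \<forall>b\<in>V. adj th a b \<longrightarrow> (a \<in> S \<longleftrightarrow> b \<notin> S)"
      and sg: "\<forall>a\<in>S. \<forall>b\<in>S. g1 a = g1 b" and c2: "card (S - {x,y}) \<ge> 2"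
    obtain u v where uv: "u \<in> S - {x,y}" "v \<in> S - {x,y}" "u \<noteq> v" using two_elems[OF c2] by blast
    have uvV: "u \<in> V" "v \<in> V" "g1 u = g1 v" using sg uv SV by auto
    have "adj (compl_tg th) u v" using E uvV uv(3) by blast
    moreover have "\<not> semiadj th u v" using semi uv SV by blast
    ultimately have "th u v = -1" by (auto simp: adj_compl semiadj_def)
    then have "even_pair V th u v" using even_from_class[OF tg cr] uv SV by auto
    then show "\<exists>u\<in>V. \<exists>v\<in>V. even_pair V th u v \<and>
       u \<notin> switch_verts V th \<and> v \<notin> switch_verts V th" using uv sv SV by blast
  qed
  define Q where "Q = V - P"
  have crQ: "\<forall>a\<in>V. \<forall>b\<in>V. adj th a b \<longrightarrow> (a \<in> Q \<longleftrightarrow> b \<notin> Q)" using cross by (auto simp: Q_def)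
  have sgP: "\<forall>a\<in>P. \<forall>b\<in>P. g1 a = g1 b" by (auto simp: P_def)
  have sgQ: "\<forall>a\<in>Q. \<forall>b\<in>Q. g1 a = g1 b"
  proof (intro ballI)
    fix a b assume "a \<in> Q" "b \<in> Q"
    then show "g1 a = g1 b" using cover[of a] cover[of b] by (auto simp: Q_def P_def)
  qed
  have fin: "finite V" using tg by (simp add: trigraph_def)
  have PV: "P \<subseteq> V" by (auto simp: P_def)
  have QV: "Q \<subseteq> V" by (auto simp: Q_def)
  have finP: "finite P" using fin PV finite_subset by blast
  have finQ: "finite Q" using fin QV finite_subset by blast
  have "V = P \<union> Q" "P \<inter> Q = {}" using PV by (auto simp: Q_def)
  then have "card V = card P + card Q" using finP finQ card_Un_disjoint by metis
  then have "card P \<ge> 3 \<or> card Q \<ge> 3" using c5 by linarith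
  moreover have "P - {x,y} = P - {x}" using yP by auto
  then have "card (P - {x,y}) = card P - 1" using xP finP by simp
  moreover have yQ: "y \<in> Q" and xQ: "x \<notin> Q" using yP xP yV by (auto simp: Q_def)
  have "Q - {x,y} = Q - {y}" using xQ by auto
  then have "card (Q - {x,y}) = card Q - 1" using yQ finQ by simp
  ultimately have "card (P - {x,y}) \<ge> 2 \<or> card (Q - {x,y}) \<ge> 2" by linarith
  then show ?thesis
  proof
    assume "card (P - {x,y}) \<ge> 2"
    then show ?thesis using good[OF PV cross sgP] by blast
  next
    assume "card (Q - {x,y}) \<ge> 2"
    then show ?thesis using good[OF QV crQ sgQ] by blast
  qed
qed

theorem proposition4p8:
  fixes V :: "'a set" and th :: "'a \<Rightarrow> 'a \<Rightarrow> int"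
  assumes "class_F V th"
    and "bipartite_tg V (compl_tg th) \<or> line_tg V (compl_tg th)"
    and "favorable V th"
  shows "is_graph_tg V th \<or>
    (\<exists>u\<in>V. \<exists>v\<in>V. even_pair V th u v \<and>
       u \<notin> switch_verts V th \<and> v \<notin> switch_verts V th)"
proof -
  have tg: "trigraph V th" using assms(1) by (simp add: class_F_def)
  have sym: "\<And>u v. u \<in> V \<Longrightarrow> v \<in> V \<Longrightarrow> u \<noteq> v \<Longrightarrow> th u v = th v u \<and> th u v \<in> {-1,0,1}"
    using tg unfolding trigraph_def by blast
  have c5: "card V \<ge> 5" using assms(3) by (simp add: favorable_def)
  consider (none) "switch_pairs V th = {}" | (small) x y where "small_comp V th x y"
    | (light) v x y where "light_comp V th v x y"
    using assms(1) unfolding class_F_def by blast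
  then show ?thesis
  proof cases
    case none
    then show ?thesis unfolding is_graph_tg_def switch_pairs_def by blast
  next
    case (light v x y)
    then have vV: "v \<in> V" and xV: "x \<in> V" and yV: "y \<in> V" and vx: "v \<noteq> x" and vy: "v \<noteq> y"
      and xy: "x \<noteq> y" and sp: "switch_pairs V th = {{v,x},{v,y}}"
      and sxy: "strongly_antiadj th x y" by (auto simp: light_comp_def)
    have t1: "th v x = 0" using sp_zero[OF tg _ vx] sp by simp
    have t2: "th v y = 0" using sp_zero[OF tg _ vy] sp by simp
    have t3: "th x y = -1" using sxy by (simp add: strongly_antiadj_def)
    have False
      using assms(2)
    proof
      assume "bipartite_tg V (compl_tg th)"
      then obtain A B where AB: "A \<union> B = V" "A \<inter> B = {}"
        "is_strongly_stable (compl_tg th) A" "is_strongly_stable (compl_tg th) B"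
        unfolding bipartite_tg_def by blast
      have "x \<in> A \<longleftrightarrow> v \<notin> A" "y \<in> A \<longleftrightarrow> v \<notin> A"
        using AB vV xV yV vx vy t1 t2 sym[OF vV xV vx] sym[OF vV yV vy]
        unfolding is_strongly_stable_def santi_compl by auto
      then have "(x \<in> A \<and> y \<in> A) \<or> (x \<in> B \<and> y \<in> B)" using AB xV yV by blast
      then show False using AB xy t3 unfolding is_strongly_stable_def santi_compl by auto
    next
      assume "line_tg V (compl_tg th)"
      then have cl: "\<forall>K\<subseteq>V. is_clique (compl_tg th) K \<and> card K \<ge> 3 \<longrightarrow> is_strong_clique (compl_tg th) K"
        by (simp add: line_tg_def)
      have "is_clique (compl_tg th) {v,x,y}"
        using t1 t2 t3 sym[OF vV xV vx] sym[OF vV yV vy] sym[OF xV yV xy] vx vy xy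
        unfolding is_clique_def adj_compl by auto
      moreover have "card {v,x,y} \<ge> 3" using vx vy xy by simp
      ultimately have "is_strong_clique (compl_tg th) {v,x,y}" using cl vV xV yV by auto
      then have "strongly_adj (compl_tg th) v x" unfolding is_strong_clique_def using vx by auto
      then show False using t1 by (simp add: sadj_compl)
    qed
    then show ?thesis by blast
  next
    case (small x y)
    then have xV: "x \<in> V" and yV: "y \<in> V" and xy: "x \<noteq> y" and sp: "switch_pairs V th = {{x,y}}"
      by (auto simp: small_comp_def)
    have t1: "th x y = 0" using sp_zero[OF tg _ xy] sp by simp
    show ?thesis using assms(2)
    proof
      assume "bipartite_tg V (compl_tg th)"
      then obtain A B where AB: "A \<union> B = V" "A \<inter> B = {}"
        "is_strongly_stable (compl_tg th) A" "is_strongly_stable (compl_tg th) B"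
        unfolding bipartite_tg_def by blast
      have key: "is_clique th (V - ({z} \<union> nbhd V th z))" if zV: "z \<in> V" for z
      proof -
        have sA: "\<And>a b. a \<in> A \<Longrightarrow> b \<in> A \<Longrightarrow> a \<noteq> b \<Longrightarrow> th a b = 1"
          using AB(3) unfolding is_strongly_stable_def santi_compl by blast
        have sB: "\<And>a b. a \<in> B \<Longrightarrow> b \<in> B \<Longrightarrow> a \<noteq> b \<Longrightarrow> th a b = 1"
          using AB(4) unfolding is_strongly_stable_def santi_compl by blast
        have "V - ({z} \<union> nbhd V th z) \<subseteq> (if z \<in> A then B else A)"
          using AB zV sA sB by (auto simp: nbhd_def adj_def)
        then show ?thesis using sA sB unfolding is_clique_def adj_def
          by (cases "z \<in> A") (auto simp: subset_iff)
      qed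
      have "is_clique th (V - ({x, y} \<union> nbhd V th x))"
        using key[OF xV] unfolding is_clique_def by blast
      moreover have "is_clique th (V - ({x, y} \<union> nbhd V th y))"
        using key[OF yV] unfolding is_clique_def by blast
      ultimately have False using assms(3) small unfolding favorable_def by blast
      then show ?thesis by blast
    next
      assume "line_tg V (compl_tg th)"
      then obtain f :: "'a \<Rightarrow> nat \<times> nat" where inj: "inj_on f V" and
        E: "\<forall>u\<in>V. \<forall>v\<in>V. u \<noteq> v \<longrightarrow>
        (adj (compl_tg th) u v \<longleftrightarrow> fst (f u) = fst (f v) \<or> snd (f u) = snd (f v))"
        and cl: "\<forall>K\<subseteq>V. is_clique (compl_tg th) K \<and> card K \<ge> 3 \<longrightarrow> is_strong_clique (compl_tg th) K"
        unfolding line_tg_def line_graph_of_bipartite_def by blast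
      have "adj (compl_tg th) x y" using t1 xy by (simp add: adj_compl)
      then have "fst (f x) = fst (f y) \<or> snd (f x) = snd (f y)" using E xV yV xy by blast
      then show ?thesis
      proof
        assume h: "fst (f x) = fst (f y)"
        have "inj_on (\<lambda>w. (snd (f w), fst (f w))) V" using inj
          unfolding inj_on_def by (auto simp: prod_eq_iff)
        moreover have "\<forall>u\<in>V. \<forall>v\<in>V. u \<noteq> v \<longrightarrow> (adj (compl_tg th) u v \<longleftrightarrow> snd (f u) = snd (f v) \<or> fst (f u) = fst (f v))"
          using E by blast
        ultimately show ?thesis using line_small[OF tg small c5 _ _ cl, of "\<lambda>w. snd (f w)" "\<lambda>w. fst (f w)"] h
          by blast
      next
        assume h: "snd (f x) = snd (f y)"
        have "inj_on (\<lambda>w. (fst (f w), snd (f w))) V" using inj by simp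
        then show ?thesis using line_small[OF tg small c5 _ E cl] h by blast
      qed
    qed
  qed
qed

end
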